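(* Let $\ell\in\mathbb{Z}_{\ge 2}$, let $a_{n,m}$ and $b_{n,m}=b_{n,m}(\ell)$ be as in the context, and let $b_n=\sum_{m\ge0}b_{n,m}$. Then the generating function $f(x)=\sum_{n\ge0}b_nx^n$ equals $$\frac{\sum_{k=0}^{\ell-1}U_k\big(\tfrac{1}{2x}\big)}{U_{\ell-1}\big(\tfrac{1}{2x}\big)}\sum_{\substack{m\ge0,\ m\equiv \ell-1\bmod\ell\\ n\ge \ell-1}} a_{n,m}x^n \;+\; \frac{\sum_{k=0}^{\ell-2}U_k\big(\tfrac{1}{2x}\big)}{x\,U_{\ell-1}\big(\tfrac{1}{2x}\big)}.$$
   Context: $U_j$ is the $j$th Chebyshev polynomial of the second kind: $U_0(x)=1$, $U_1(x)=2x$, $U_j(x)=2xU_{j-1}(x)-U_{j-2}(x)$. For $n,m\in\mathbb{Z}_{\ge 0}$, $a_{n,m}$ is the number of unit step paths $(x_0,\dots,x_n)$ on $\mathbb{Z}_{\ge0}$ (integers $x_i\ge0$, $|x_i-x_{i-1}|=1$) with $x_0=0$, $x_n=m$. For fixed $\ell\in\mathbb{Z}_{\ge2}$, $b_{n,m}=b_{n,m}(\ell)$ is defined by: $b_{n,m}=a_{n,m}$ if $m\equiv-1\pmod\ell$; $b_{n,m}=b_{n-1,m-1}+b_{n-1,m+1}$ if $m\equiv m_0\pmod\ell$ with $0\le m_0<\ell-2$; $b_{n,m}=b_{n-1,m-1}$ if $m\equiv-2\pmod\ell$; the recursion is used for $n\ge1$ with $b_{0,0}=1$, $b_{0,m}=0$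 for $m>0$, and $b_{n,-1}=0$. The identity is of formal power series in $x$. *)

theory Defs
  imports Complex_Main "HOL-Computational_Algebra.Formal_Laurent_Series"
begin

fun chebU :: "nat \<Rightarrow> 'a::comm_ring_1 \<Rightarrow> 'a" where
  "chebU 0 x = 1"
| "chebU (Suc 0) x = 2 * x"
| "chebU (Suc (Suc j)) x = 2 * x * chebU (Suc j) x - chebU j x"

definition apath :: "nat \<Rightarrow> nat \<Rightarrow> nat" where
  "apath n m = card {xs :: nat list. length xs = Suc n \<and> xs ! 0 = 0 \<and> xs ! n = m \<and>
       (\<forall>i<n. \<bar>int (xs ! Suc i) - int (xs ! i)\<bar> = 1)}"

text \<open>b l n m = b_{n,m}(l); the value b_{n-1,-1} is 0.\<close>
fun bpath :: "nat \<Rightarrow> nat \<Rightarrow> nat \<Rightarrow> nat" where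
  "bpath l 0 m = (if m mod l = l - 1 then apath 0 m else if m = 0 then 1 else 0)"
| "bpath l (Suc n) m =
     (if m mod l = l - 1 then apath (Suc n) m
      else if m mod l = l - 2 then (if m = 0 then 0 else bpath l n (m - 1))
      else (if m = 0 then 0 else bpath l n (m - 1)) + bpath l n (m + 1))"

definition bsum :: "nat \<Rightarrow> nat \<Rightarrow> real" where
  "bsum l n = (\<Sum>m. real (bpath l n m))"

end

theory Submission
  imports Defs
begin


lemma apath_path_le:
  assumes "\<forall>i<n. \<bar>int (xs ! Suc i) - int (xs ! i)\<bar> = 1" "xs ! 0 = 0" "i \<le> n"
  shows "xs ! i \<le> i"
  using assms(3)
proof (induction i)
  case 0 then show ?case using assms(2) by simp
next
  case (Suc i)
  then have "xs ! i \<le> i" by simp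
  moreover have "\<bar>int (xs ! Suc i) - int (xs ! i)\<bar> = 1" using assms(1) Suc.prems by simp
  ultimately show ?case by linarith
qed

lemma apath_zero: "n < m \<Longrightarrow> apath n m = 0"
proof -
  assume nm: "n < m"
  have "{xs :: nat list. length xs = Suc n \<and> xs ! 0 = 0 \<and> xs ! n = m \<and>
       (\<forall>i<n. \<bar>int (xs ! Suc i) - int (xs ! i)\<bar> = 1)} = {}"
    using apath_path_le[of n _ n] nm by fastforce
  then show ?thesis unfolding apath_def by (metis card.empty)
qed

lemma bpath_zero: "n < m \<Longrightarrow> bpath l n m = 0"
proof (induction n arbitrary: m)
  case 0 then show ?case using apath_zero by simp
next
  case (Suc n) then show ?case using apath_zero by simp
qed

lemma sum_blocks: "(\<Sum>m<K*l. f m) = (\<Sum>k<K. \<Sum>j<l. f (k*l+j :: nat))"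
proof -
  have "(\<Sum>m<K*l. f m) = (\<Sum>k<K. sum f {k*l..<k*l+l})" by (rule sum.nat_group[symmetric])
  also have "\<dots> = (\<Sum>k<K. \<Sum>j<l. f (k*l+j))"
  proof (rule sum.cong[OF refl])
    fix k
    show "sum f {k*l..<k*l+l} = (\<Sum>j<l. f (k*l+j))"
      using sum.shift_bounds_nat_ivl[of f 0 "k*l" l] by (simp add: atLeast0LessThan add.commute)
  qed
  finally show ?thesis .
qed



definition LF :: "(nat \<Rightarrow> real fps) \<Rightarrow> real fps" where
  "LF W = Abs_fps (\<lambda>n. \<Sum>k\<le>n. W k $ n)"

definition vanish :: "real fps \<Rightarrow> nat \<Rightarrow> bool" where
  "vanish f a \<longleftrightarrow> (\<forall>n<a. f $ n = 0)"

lemma vanish_mult: "vanish f a \<Longrightarrow> vanish (c * f) a"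
  unfolding vanish_def by (auto simp: fps_mult_nth intro!: sum.neutral)

lemma vanish_X: "vanish f a \<Longrightarrow> vanish (fps_X * f) (Suc a)"
  unfolding vanish_def by (auto simp: fps_X_mult_nth)

lemma vanish_mono: "vanish f a \<Longrightarrow> b \<le> a \<Longrightarrow> vanish f b"
  unfolding vanish_def by auto

lemma LF_add: "LF (\<lambda>k. U k + V k) = LF U + LF V"
  unfolding LF_def by (simp add: sum.distrib fps_eq_iff)

lemma LF_delta: "LF (\<lambda>k. if k = 0 then c else 0) = c"
proof -
  have "\<And>k n. (if k = 0 then c else 0) $ n = (if k = 0 then c $ n else 0)" by simp
  have "(\<Sum>k\<le>n. (if k = 0 then c else 0) $ n) = (\<Sum>k\<le>n. if k = 0 then c $ n else 0)" for n
    by (rule sum.cong) auto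
  then show ?thesis unfolding LF_def by (simp add: fps_eq_iff)
qed

lemma LF_mult:
  assumes v: "\<And>k. vanish (W k) k"
  shows "c * LF W = LF (\<lambda>k. c * W k)"
proof (rule fps_ext)
  fix n
  have "(c * LF W) $ n = (\<Sum>i=0..n. c $ i * (\<Sum>k\<le>n-i. W k $ (n-i)))"
    by (simp add: fps_mult_nth LF_def)
  also have "\<dots> = (\<Sum>i=0..n. c $ i * (\<Sum>k\<le>n. W k $ (n-i)))"
  proof (rule sum.cong[OF refl])
    fix i assume i: "i \<in> {0..n}"
    have "(\<Sum>k\<le>n. W k $ (n-i)) = (\<Sum>k\<le>n-i. W k $ (n-i))"
      by (rule sum.mono_neutral_right) (use v in \<open>auto simp: vanish_def\<close>)
    then show "c $ i * (\<Sum>k\<le>n-i. W k $ (n-i)) = c $ i * (\<Sum>k\<le>n. W k $ (n-i))" by simp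
  qed
  also have "\<dots> = (\<Sum>k\<le>n. \<Sum>i=0..n. c $ i * W k $ (n-i))"
    by (simp add: sum_distrib_left sum.swap[of _ "{0..n}"])
  also have "\<dots> = LF (\<lambda>k. c * W k) $ n"
    by (simp add: LF_def fps_mult_nth)
  finally show "(c * LF W) $ n = LF (\<lambda>k. c * W k) $ n" .
qed

lemma LF_shift:
  assumes v: "\<And>k. vanish (V k) (Suc k)"
  shows "LF (\<lambda>k. if k = 0 then 0 else V (k - 1)) = LF V"
proof (rule fps_ext)
  fix n
  have e: "\<And>k. (if k = 0 then 0 else V (k - 1)) $ n = (if k = 0 then 0 else V (k - 1) $ n)" by simp
  have "(\<Sum>k\<le>n. (if k = 0 then 0 else V (k - 1)) $ n) = (\<Sum>k\<le>n. V k $ n)"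
  proof (cases n)
    case 0 then show ?thesis using v[of 0] by (simp add: vanish_def)
  next
    case (Suc n')
    have "(\<Sum>k\<le>n. (if k = 0 then 0 else V (k - 1)) $ n) = (\<Sum>k\<le>n'. V k $ n)"
      unfolding Suc by (subst sum.atMost_Suc_shift) (simp add: e)
    also have "\<dots> = (\<Sum>k\<le>n. V k $ n)"
      using v[of n] Suc by (simp add: vanish_def)
    finally show ?thesis .
  qed
  then show "LF (\<lambda>k. if k = 0 then 0 else V (k - 1)) $ n = LF V $ n"
    by (simp add: LF_def)
qed

lemma homog_zero:
  fixes E :: "nat \<Rightarrow> real fps"
  assumes h: "\<And>m. P m \<Longrightarrow> E m = fps_X * ((if ca m then 0 else E (m-1)) + (if cb m then 0 else E (m+1)))"
    and p1: "\<And>m. P m \<Longrightarrow> \<not> ca m \<Longrightarrow> P (m-1)"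
    and p2: "\<And>m. P m \<Longrightarrow> \<not> cb m \<Longrightarrow> P (m+1)"
    and pm: "P m"
  shows "E m = 0"
proof -
  have "\<forall>m. P m \<longrightarrow> E m $ n = 0" for n
  proof (induction n)
    case 0 then show ?case using h by (auto simp: fps_X_mult_nth)
  next
    case (Suc n)
    show ?case
    proof (intro allI impI)
      fix m assume "P m"
      then show "E m $ Suc n = 0"
        using h[of m] p1[of m] p2[of m] Suc.IH by (auto simp: fps_X_mult_nth)
    qed
  qed
  then show ?thesis using pm by (simp add: fps_eq_iff)
qed



fun pp :: "nat \<Rightarrow> real fps" where
  "pp 0 = 1"
| "pp (Suc 0) = 1"
| "pp (Suc (Suc k)) = pp (Suc k) - fps_X^2 * pp k"

definition gg :: "nat \<Rightarrow> nat \<Rightarrow> real fps" where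
  "gg l m = Abs_fps (\<lambda>n. real (bpath l n m))"

definition aa :: "nat \<Rightarrow> real fps" where
  "aa m = Abs_fps (\<lambda>n. real (apath n m))"

lemma vanish_aa: "vanish (aa m) m"
  by (simp add: vanish_def aa_def apath_zero)

lemma gg_top: "m mod l = l - 1 \<Longrightarrow> gg l m = aa m"
  unfolding gg_def aa_def by (rule fps_ext) (case_tac n, auto)

lemma gg_rec: "m mod l \<noteq> l - 1 \<Longrightarrow> gg l m = (if m = 0 then 1 else 0) +
   fps_X * ((if m = 0 then 0 else gg l (m-1)) + (if m mod l = l - 2 then 0 else gg l (m+1)))"
  unfolding gg_def by (rule fps_ext) (case_tac n, auto simp: fps_X_mult_nth)

lemma pp_rec:
  assumes "j < h"
  shows "fps_X^j * pp (h-1-j) = (if j = 0 then pp h else 0) +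
     fps_X * ((if j = 0 then 0 else fps_X^(j-1) * pp (h-j)) +
              (if j = h - 1 then 0 else fps_X^(j+1) * pp (h-2-j)))"
proof -
  consider "j = 0" "h = 1" | "j = 0" "h \<ge> 2" | "j > 0" "j = h - 1" | "j > 0" "j < h - 1"
    using assms by linarith
  then show ?thesis
  proof cases
    case 1 then show ?thesis by simp
  next
    case 2
    then obtain t where t: "h = Suc (Suc t)" by (metis add_2_eq_Suc le_Suc_ex)
    show ?thesis using 2 by (simp add: t algebra_simps power2_eq_square)
  next
    case 3
    then obtain t where t: "j = Suc t" by (metis gr0_implies_Suc)
    have h: "h = Suc (Suc t)" using 3 t by auto
    show ?thesis by (simp add: t h)
  next
    case 4
    define t where "t = h - j - 2"
    have t: "h - j = Suc (Suc t)" using 4 unfolding t_def by auto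
    have a: "h - 1 - j = Suc t" "h - 2 - j = t" using t by auto
    obtain s where s: "j = Suc s" using 4 by (metis gr0_implies_Suc)
    have c: "j \<noteq> 0" "j \<noteq> h - 1" using 4 by auto
    have b: "h - Suc (Suc s) = Suc t" "h - Suc s = Suc (Suc t)" "h - Suc (Suc (Suc s)) = t"
      using t s by auto
    show ?thesis using c unfolding s by (simp add: b algebra_simps power2_eq_square)
  qed
qed



definition II :: "nat \<Rightarrow> nat \<Rightarrow> real fps" where
  "II l k = (if k = 0 then 1 else fps_X * aa ((k-1)*l + (l-1)))"

definition TT :: "nat \<Rightarrow> nat \<Rightarrow> real fps" where
  "TT l m = II l (m div l) * (fps_X^(m mod l) * pp (l - 2 - m mod l))"

lemma divmod_blk: "j < (l::nat) \<Longrightarrow> (k*l+j) div l = k \<and> (k*l+j) mod l = j"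
  by simp

lemma gg_rec2:
  assumes l: "l \<ge> 2" and j: "m mod l < l - 1"
  shows "gg l m = (if m mod l = 0 then II l (m div l) else 0) +
     fps_X * ((if m mod l = 0 then 0 else gg l (m-1)) + (if m mod l = l - 2 then 0 else gg l (m+1)))"
proof -
  have r: "gg l m = (if m = 0 then 1 else 0) +
   fps_X * ((if m = 0 then 0 else gg l (m-1)) + (if m mod l = l - 2 then 0 else gg l (m+1)))"
    using gg_rec[of m l] j by simp
  show ?thesis
  proof (cases "m mod l = 0")
    case True
    show ?thesis
    proof (cases "m = 0")
      case True then show ?thesis using r by (simp add: II_def)
    next
      case False
      obtain k where mk: "m = k * l" using \<open>m mod l = 0\<close> by (metis mult.commute mod_0_imp_dvd dvdE)
      with False obtain k' where k': "k = Suc k'" by (metis mult_is_0 not0_implies_Suc)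
      have m1: "m - 1 = k' * l + (l - 1)" using mk k' l by simp
      have "(m - 1) mod l = l - 1" using m1 l divmod_blk[of "l-1" l k'] by simp
      then have "gg l (m-1) = aa (m-1)" by (rule gg_top)
      moreover have "m div l = k" using mk l by simp
      ultimately show ?thesis using r False True k' m1 by (simp add: II_def algebra_simps)
    qed
  next
    case False
    then have "m \<noteq> 0" by (cases "m = 0") simp_all
    then show ?thesis using r False by simp
  qed
qed

lemma TT_rec:
  assumes l: "l \<ge> 2" and j: "m mod l < l - 1"
  shows "TT l m = (if m mod l = 0 then II l (m div l) * pp (l-1) else 0) +
     fps_X * ((if m mod l = 0 then 0 else TT l (m-1)) + (if m mod l = l - 2 then 0 else TT l (m+1)))"
proof -
  define k where "k = m div l"
  define i where "i = m mod l"
  have m: "m = k * l + i" unfolding k_def i_def by simp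
  have i: "i < l - 1" using j i_def by simp
  have pr: "fps_X^i * pp (l-1-1-i) = (if i = 0 then pp (l-1) else 0) +
     fps_X * ((if i = 0 then 0 else fps_X^(i-1) * pp (l-1-i)) +
              (if i = l-1 - 1 then 0 else fps_X^(i+1) * pp (l-1-2-i)))"
    by (rule pp_rec) (use i in simp)
  have t0: "TT l m = II l k * (fps_X^i * pp (l-1-1-i))"
    unfolding TT_def k_def i_def by (simp add: numeral_2_eq_2)
  have t1: "i \<noteq> 0 \<Longrightarrow> TT l (m-1) = II l k * (fps_X^(i-1) * pp (l-1-i))"
  proof -
    assume "i \<noteq> 0"
    then have "m - 1 = k*l + (i-1)" "i - 1 < l" using m i by auto
    then have "(m-1) div l = k" "(m-1) mod l = i - 1" using divmod_blk by metis+
    then show ?thesis unfolding TT_def using \<open>i \<noteq> 0\<close> by (simp add: numeral_2_eq_2)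
  qed
  have t2: "i \<noteq> l - 2 \<Longrightarrow> TT l (m+1) = II l k * (fps_X^(i+1) * pp (l-1-2-i))"
  proof -
    assume "i \<noteq> l - 2"
    then have "m + 1 = k*l + (i+1)" "i + 1 < l" using m i by auto
    then have "(m+1) div l = k" "(m+1) mod l = i + 1" using divmod_blk by metis+
    then show ?thesis unfolding TT_def by (simp add: numeral_2_eq_2)
  qed
  have "TT l m = II l k * ((if i = 0 then pp (l-1) else 0) +
     fps_X * ((if i = 0 then 0 else fps_X^(i-1) * pp (l-1-i)) +
              (if i = l-1 - 1 then 0 else fps_X^(i+1) * pp (l-1-2-i))))"
    using t0 pr by simp
  also have "\<dots> = (if i = 0 then II l k * pp (l-1) else 0) +
     fps_X * ((if i = 0 then 0 else TT l (m-1)) + (if i = l - 2 then 0 else TT l (m+1)))"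
    using t1 t2 by (simp add: algebra_simps numeral_2_eq_2)
  finally show ?thesis unfolding k_def i_def .
qed

lemma strip:
  assumes l: "l \<ge> 2" and j: "m mod l < l - 1"
  shows "pp (l-1) * gg l m = TT l m"
proof -
  define E where "E m = pp (l-1) * gg l m - TT l m" for m
  have "E m = 0"
  proof (rule homog_zero[where P = "\<lambda>m. m mod l < l - 1" and ca = "\<lambda>m. m mod l = 0"
        and cb = "\<lambda>m. m mod l = l - 2"])
    fix m assume mj: "m mod l < l - 1"
    show "E m = fps_X * ((if m mod l = 0 then 0 else E (m-1)) + (if m mod l = l - 2 then 0 else E (m+1)))"
      unfolding E_def
      apply (subst gg_rec2[OF l mj])
      apply (subst TT_rec[OF l mj])
      by (simp add: algebra_simps)
  next
    fix m assume "m mod l < l - 1" "\<not> m mod l = 0"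
    moreover have "m - 1 = (m div l) * l + (m mod l - 1)"
      using \<open>\<not> m mod l = 0\<close> div_mult_mod_eq[of m l] by linarith
    ultimately show "(m - 1) mod l < l - 1"
      using divmod_blk[of "m mod l - 1" l "m div l"] by simp
  next
    fix m assume a: "m mod l < l - 1" "\<not> m mod l = l - 2"
    then have "m mod l + 1 < l - 1" by linarith
    moreover have "m + 1 = (m div l) * l + (m mod l + 1)"
      using div_mult_mod_eq[of m l] by linarith
    ultimately show "(m + 1) mod l < l - 1"
      using divmod_blk[of "m mod l + 1" l "m div l"] by simp
  next
    show "m mod l < l - 1" by fact
  qed
  then show ?thesis unfolding E_def by simp
qed



definition QQ :: "nat \<Rightarrow> real fps" where
  "QQ l = (\<Sum>j<l-1. fps_X^j * pp (l - 2 - j))"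

definition WW :: "nat \<Rightarrow> nat \<Rightarrow> real fps" where
  "WW l k = (\<Sum>j<l. gg l (k*l+j))"

lemma block:
  assumes l: "l \<ge> 2"
  shows "pp (l-1) * WW l k = pp (l-1) * aa (k*l+(l-1)) + II l k * QQ l"
proof -
  have ls: "l = Suc (l-1)" using l by simp
  have "WW l k = (\<Sum>j<l-1. gg l (k*l+j)) + gg l (k*l+(l-1))"
    unfolding WW_def by (subst ls) (simp only: sum.lessThan_Suc)
  moreover have "gg l (k*l+(l-1)) = aa (k*l+(l-1))"
    by (rule gg_top) (use l divmod_blk[of "l-1" l k] in simp)
  moreover have "pp (l-1) * (\<Sum>j<l-1. gg l (k*l+j)) = II l k * QQ l"
  proof -
    have "pp (l-1) * (\<Sum>j<l-1. gg l (k*l+j)) = (\<Sum>j<l-1. pp (l-1) * gg l (k*l+j))"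
      by (simp add: sum_distrib_left)
    also have "\<dots> = (\<Sum>j<l-1. II l k * (fps_X^j * pp (l - 2 - j)))"
    proof (rule sum.cong[OF refl])
      fix j assume "j \<in> {..<l-1}"
      then have j: "j < l - 1" by simp
      then have dm: "(k*l+j) div l = k" "(k*l+j) mod l = j" using divmod_blk[of j l k] by auto
      have "pp (l-1) * gg l (k*l+j) = TT l (k*l+j)"
        by (rule strip[OF l]) (use dm j in simp)
      then show "pp (l-1) * gg l (k*l+j) = II l k * (fps_X^j * pp (l - 2 - j))"
        unfolding TT_def dm .
    qed
    also have "\<dots> = II l k * QQ l" by (simp add: QQ_def sum_distrib_left)
    finally show ?thesis .
  qed
  ultimately show ?thesis by (simp add: algebra_simps)
qed

lemma F_LF:
  assumes l: "l \<ge> 2"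
  shows "Abs_fps (\<lambda>n. bsum l n) = LF (WW l)"
proof (rule fps_ext)
  fix n
  have "bsum l n = (\<Sum>m<Suc n * l. real (bpath l n m))"
    unfolding bsum_def
  proof (rule suminf_finite)
    show "finite {..<Suc n * l}" by simp
    fix m assume "m \<notin> {..<Suc n * l}"
    moreover have "Suc n * 1 \<le> Suc n * l" by (rule mult_le_mono2) (use l in simp)
    ultimately have "n < m" by simp
    then show "real (bpath l n m) = 0" by (simp add: bpath_zero)
  qed
  also have "\<dots> = (\<Sum>k<Suc n. \<Sum>j<l. real (bpath l n (k*l+j)))" by (rule sum_blocks)
  also have "\<dots> = LF (WW l) $ n"
    by (simp add: LF_def WW_def gg_def fps_sum_nth lessThan_Suc_atMost)
  finally show "Abs_fps (bsum l) $ n = LF (WW l) $ n" by simp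
qed

lemma A_LF:
  assumes l: "l \<ge> 2"
  shows "Abs_fps (\<lambda>n. if n \<ge> l - 1
                then (\<Sum>m. if m mod l = l - 1 then real (apath n m) else 0) else 0)
       = LF (\<lambda>k. aa (k*l+(l-1)))"
proof (rule fps_ext)
  fix n
  have "(\<Sum>m. if m mod l = l - 1 then real (apath n m) else 0) =
        (\<Sum>m<Suc n * l. if m mod l = l - 1 then real (apath n m) else 0)"
  proof (rule suminf_finite)
    show "finite {..<Suc n * l}" by simp
    fix m assume "m \<notin> {..<Suc n * l}"
    moreover have "Suc n * 1 \<le> Suc n * l" by (rule mult_le_mono2) (use l in simp)
    ultimately have "n < m" by simp
    then show "(if m mod l = l - 1 then real (apath n m) else 0) = 0" by (simp add: apath_zero)
  qed
  also have "\<dots> = (\<Sum>k<Suc n. \<Sum>j<l. if (k*l+j) mod l = l - 1 then real (apath n (k*l+j)) else 0)"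
    by (rule sum_blocks)
  also have "\<dots> = (\<Sum>k<Suc n. real (apath n (k*l+(l-1))))"
  proof (rule sum.cong[OF refl])
    fix k
    have "(\<Sum>j<l. if (k*l+j) mod l = l - 1 then real (apath n (k*l+j)) else 0)
        = (\<Sum>j<l. if j = l - 1 then real (apath n (k*l+j)) else 0)"
      by (rule sum.cong[OF refl]) (simp add: divmod_blk)
    also have "\<dots> = real (apath n (k*l+(l-1)))" using l by (simp add: sum.delta')
    finally show "(\<Sum>j<l. if (k*l+j) mod l = l - 1 then real (apath n (k*l+j)) else 0) = real (apath n (k*l+(l-1)))" .
  qed
  finally have eq: "(\<Sum>m. if m mod l = l - 1 then real (apath n m) else 0) = (\<Sum>k\<le>n. real (apath n (k*l+(l-1))))"
    by (simp add: lessThan_Suc_atMost)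
  have "(if n \<ge> l - 1 then (\<Sum>m. if m mod l = l - 1 then real (apath n m) else 0) else 0)
      = (\<Sum>k\<le>n. real (apath n (k*l+(l-1))))"
  proof (cases "n \<ge> l - 1")
    case True then show ?thesis using eq by simp
  next
    case False
    then show ?thesis by (auto intro!: sum.neutral simp: apath_zero)
  qed
  then show "Abs_fps (\<lambda>n. if n \<ge> l - 1
                then (\<Sum>m. if m mod l = l - 1 then real (apath n m) else 0) else 0) $ n
       = LF (\<lambda>k. aa (k*l+(l-1))) $ n"
    by (simp add: LF_def aa_def)
qed



lemma le_kl: "(l::nat) \<ge> 2 \<Longrightarrow> k \<le> k * l + j"
proof -
  assume "l \<ge> 2"
  then have "k * 1 \<le> k * l" by (intro mult_le_mono2) simp
  then show ?thesis by linarith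
qed

lemma vanish_WW: "l \<ge> 2 \<Longrightarrow> vanish (WW l k) k"
  unfolding vanish_def WW_def gg_def
proof (auto simp: fps_sum_nth intro!: sum.neutral bpath_zero)
  fix n x assume "2 \<le> l" "n < k"
  then show "n < k * l + x" using le_kl[of l k x] by linarith
qed

lemma vanish_aak: "l \<ge> 2 \<Longrightarrow> vanish (aa (k*l+(l-1))) k"
  using vanish_aa[of "k*l+(l-1)"] le_kl[of l k "l-1"] vanish_mono by blast

lemma fps_main:
  assumes l: "l \<ge> 2"
  shows "pp (l-1) * LF (WW l) = LF (\<lambda>k. aa (k*l+(l-1))) * (fps_X * QQ l + pp (l-1)) + QQ l"
proof -
  define A where "A = LF (\<lambda>k. aa (k*l+(l-1)))"
  define V where "V k = fps_X * QQ l * aa (k*l+(l-1))" for k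
  have vV: "vanish (V k) (Suc k)" for k
    unfolding V_def using vanish_X[OF vanish_mult[OF vanish_aak[OF l, of k], of "QQ l"]]
    by (simp add: mult.assoc)
  have "pp (l-1) * LF (WW l) = LF (\<lambda>k. pp (l-1) * WW l k)"
    by (rule LF_mult) (rule vanish_WW[OF l])
  also have "\<dots> = LF (\<lambda>k. pp (l-1) * aa (k*l+(l-1)) + II l k * QQ l)"
    by (rule arg_cong[where f=LF], rule ext, rule block[OF l])
  also have "\<dots> = LF (\<lambda>k. pp (l-1) * aa (k*l+(l-1))) + LF (\<lambda>k. II l k * QQ l)"
    by (rule LF_add)
  also have "LF (\<lambda>k. pp (l-1) * aa (k*l+(l-1))) = pp (l-1) * A"
    unfolding A_def by (rule LF_mult[symmetric]) (rule vanish_aak[OF l])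
  also have "(\<lambda>k. II l k * QQ l) = (\<lambda>k. (if k = 0 then QQ l else 0) + (if k = 0 then 0 else V (k-1)))"
    by (rule ext) (simp add: II_def V_def algebra_simps)
  also have "LF \<dots> = QQ l + LF (\<lambda>k. if k = 0 then 0 else V (k-1))"
    by (simp add: LF_add LF_delta)
  also have "LF (\<lambda>k. if k = 0 then 0 else V (k-1)) = LF V"
    by (rule LF_shift) (rule vV)
  also have "LF V = fps_X * QQ l * A"
    unfolding V_def A_def by (rule LF_mult[symmetric]) (rule vanish_aak[OF l])
  finally show ?thesis unfolding A_def[symmetric] by (simp add: algebra_simps)
qed



lemma fps_to_fls_sum: "fps_to_fls (sum f A) = (\<Sum>x\<in>A. fps_to_fls (f x))"
  by (induction A rule: infinite_finite_induct) auto

lemma pp_nth0: "pp k $ 0 = 1"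
  by (induction k rule: pp.induct) auto

lemma pp_nz: "pp k \<noteq> 0"
  using pp_nth0[of k] by auto

lemma cheb_pp:
  fixes y Z :: "real fls"
  assumes y: "2 * y = Z" and XZ: "fls_X * Z = 1"
  shows "chebU k y = fps_to_fls (pp k) * Z ^ k"
proof (induction k rule: pp.induct)
  case 1 then show ?case by simp
next
  case 2 then show ?case using y by simp
next
  case (3 k)
  have e: "fls_X^2 * Z^(Suc (Suc k)) = Z^k"
  proof -
    have "fls_X^2 * Z^(Suc (Suc k)) = (fls_X * Z)^2 * Z^k" by (simp add: power2_eq_square algebra_simps)
    then show ?thesis using XZ by simp
  qed
  have "chebU (Suc (Suc k)) y = 2 * y * chebU (Suc k) y - chebU k y" by simp
  also have "\<dots> = Z * (fps_to_fls (pp (Suc k)) * Z ^ Suc k) - fps_to_fls (pp k) * Z ^ k"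
    using 3 y by simp
  also have "\<dots> = fps_to_fls (pp (Suc k)) * Z ^ Suc (Suc k) - fps_to_fls (pp k) * (fls_X^2 * Z^(Suc (Suc k)))"
    by (subst e) (simp add: algebra_simps)
  also have "\<dots> = fps_to_fls (pp (Suc (Suc k))) * Z ^ Suc (Suc k)"
    by (simp add: fls_times_fps_to_fls fps_to_fls_power algebra_simps)
  finally show ?case .
qed



theorem lemma2p11:
  fixes l :: nat
  assumes "l \<ge> 2"
  defines "y \<equiv> inverse (2 * fls_X) :: real fls"
  shows "fps_to_fls (Abs_fps (\<lambda>n. bsum l n)) =
           (\<Sum>k = 0..l-1. chebU k y) / chebU (l-1) y *
             fps_to_fls (Abs_fps (\<lambda>n. if n \<ge> l - 1
                then (\<Sum>m. if m mod l = l - 1 then real (apath n m) else 0) else 0))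
         + (\<Sum>k = 0..l-2. chebU k y) / (fls_X * chebU (l-1) y)"
proof -
  note l = assms(1)
  define Z where "Z = inverse (fls_X :: real fls)"
  define h where "h = l - 1"
  have h1: "h \<ge> 1" and lh: "l - 2 = h - 1" using l unfolding h_def by auto
  have X0: "(fls_X :: real fls) \<noteq> 0" by simp
  have XZ: "fls_X * Z = 1" unfolding Z_def by (rule right_inverse[OF X0])
  have two: "(2 :: real fls) \<noteq> 0" by simp
  have y2: "2 * y = Z"
    unfolding y_def Z_def
    by (simp only: inverse_mult_distrib mult.assoc[symmetric] right_inverse[OF two] mult_1_left)
  define P where "P k = fps_to_fls (pp k)" for k
  have cheb: "chebU k y = P k * Z^k" for k
    unfolding P_def by (rule cheb_pp[OF y2 XZ])
  define Ff where "Ff = fps_to_fls (Abs_fps (\<lambda>n. bsum l n))"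
  define Af where "Af = fps_to_fls (Abs_fps (\<lambda>n. if n \<ge> l - 1
                then (\<Sum>m. if m mod l = l - 1 then real (apath n m) else 0) else 0))"
  define Qf where "Qf = fps_to_fls (QQ l)"
  have main: "P h * Ff = Af * (fls_X * Qf + P h) + Qf"
  proof -
    have "fps_to_fls (pp (l-1) * LF (WW l)) = fps_to_fls (LF (\<lambda>k. aa (k*l+(l-1))) * (fps_X * QQ l + pp (l-1)) + QQ l)"
      using fps_main[OF l] by simp
    then show ?thesis
      unfolding P_def Ff_def Af_def Qf_def F_LF[OF l] A_LF[OF l] h_def
      by (simp add: fls_times_fps_to_fls)
  qed
  have XQ: "fps_X * QQ l = (\<Sum>k<h. fps_X^(h-k) * pp k)"
  proof -
    define g where "g k = fps_X^(h-1-k) * pp k" for k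
    have "QQ l = (\<Sum>i<h. g (h - Suc i))"
      unfolding QQ_def h_def[symmetric] lh g_def
      by (rule sum.cong[OF refl]) (auto simp: Suc_diff_Suc)
    also have "\<dots> = (\<Sum>i<h. g i)" by (rule sum.nat_diff_reindex)
    finally have "fps_X * QQ l = (\<Sum>i<h. fps_X * g i)" by (simp add: sum_distrib_left)
    also have "\<dots> = (\<Sum>k<h. fps_X^(h-k) * pp k)"
    proof (rule sum.cong[OF refl])
      fix k assume "k \<in> {..<h}"
      then have "h - k = Suc (h - 1 - k)" by auto
      then show "fps_X * g k = fps_X^(h-k) * pp k" unfolding g_def by simp
    qed
    finally show ?thesis .
  qed
  have ZX: "Z^k * fls_X^h = fls_X^(h-k)" if "k \<le> h" for k
  proof -
    have "fls_X^h = fls_X^k * (fls_X :: real fls)^(h-k)" using that by (simp flip: power_add)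
    moreover have "Z^k * fls_X^k = 1" using XZ by (simp flip: power_mult_distrib add: mult.commute)
    ultimately show ?thesis by (simp add: mult.assoc[symmetric])
  qed
  define S2 where "S2 = (\<Sum>k<h. P k * Z^k)"
  have S2X: "S2 * fls_X^h = fls_X * Qf"
  proof -
    have "S2 * fls_X^h = (\<Sum>k<h. P k * (Z^k * fls_X^h))"
      unfolding S2_def by (simp add: sum_distrib_right mult.assoc)
    also have "\<dots> = (\<Sum>k<h. P k * fls_X^(h-k))"
      by (rule sum.cong[OF refl]) (simp add: ZX)
    also have "\<dots> = fls_X * Qf"
      unfolding Qf_def P_def
      using arg_cong[OF XQ, of fps_to_fls]
      by (simp add: fps_to_fls_sum fls_times_fps_to_fls fps_to_fls_power mult.commute)
    finally show ?thesis .
  qed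
  have s1: "(\<Sum>k = 0..l-1. chebU k y) = S2 + P h * Z^h"
    unfolding h_def[symmetric] S2_def cheb
    by (simp add: atLeast0AtMost lessThan_Suc_atMost[symmetric])
  have s2: "(\<Sum>k = 0..l-2. chebU k y) = S2"
  proof -
    have "{0..l-2} = {..<h}" using h1 lh by auto
    then show ?thesis unfolding S2_def cheb by simp
  qed
  have U: "chebU (l-1) y = P h * Z^h" unfolding h_def cheb ..
  have Pnz: "P h \<noteq> 0" unfolding P_def by (simp add: pp_nz)
  have Znz: "Z \<noteq> 0" using XZ by auto
  have UX: "P h * Z^h * fls_X^h = P h" using ZX[of h] by (simp add: mult.assoc)
  define D where "D = (fls_X :: real fls)^h"
  have Dnz: "D \<noteq> 0" unfolding D_def by simp
  have "(S2 + P h * Z^h) / (P h * Z^h) = ((S2 + P h * Z^h) * D) / (P h * Z^h * D)"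
    using Dnz by simp
  also have "\<dots> = (fls_X * Qf + P h) / P h"
    unfolding D_def by (simp only: distrib_right S2X UX)
  finally have e1: "(S2 + P h * Z^h) / (P h * Z^h) = (fls_X * Qf + P h) / P h" .
  have "S2 / (fls_X * (P h * Z^h)) = (S2 * D) / (fls_X * (P h * Z^h * D))"
    using Dnz by (simp add: mult.assoc)
  also have "\<dots> = Qf / P h"
    using S2X UX X0 unfolding D_def by simp
  finally have e2: "S2 / (fls_X * (P h * Z^h)) = Qf / P h" .
  have "Ff = ((fls_X * Qf + P h) / P h) * Af + Qf / P h"
    using main Pnz by (simp add: field_simps)
  then show ?thesis
    unfolding s1 s2 U e1 e2 Ff_def[symmetric] Af_def[symmetric] .
qed

end
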